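(* Let $n$ be a positive integer and let $\alpha,\beta,\gamma,\delta: \mathcal{P}(n) \to [0,\infty)$ satisfy \[ \alpha(A)\beta(B) \leq \gamma(B \setminus A)\,\delta(A \setminus B) \quad \text{for all } A,B \in \mathcal{P}(n). \] Then \[ \Big(\sum_{A \in \mathcal{P}(n)}\alpha(A)\Big)\Big(\sum_{B \in \mathcal{P}(n)}\beta(B)\Big) \leq \Big(\sum_{C \in \mathcal{P}(n)}\gamma(C)\Big)\Big(\sum_{D \in \mathcal{P}(n)}\delta(D)\Big). \]
   Context: $[n]=\{1,\dots,n\}$ and $\mathcal{P}(n)$ denotes the power set of $[n]$. *)

theory Defs
  imports Complex_Main
begin

end

theory Submission
  imports Defs
begin

lemma two_point:
  fixes a0 a1 b0 b1 c0 c1 d0 d1 :: real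
  assumes nn: "a0 \<ge> 0" "a1 \<ge> 0" "b0 \<ge> 0" "b1 \<ge> 0" "c0 \<ge> 0" "c1 \<ge> 0" "d0 \<ge> 0" "d1 \<ge> 0"
    and h1: "a0*b0 \<le> c0*d0" and h2: "a1*b1 \<le> c0*d0"
    and h3: "a0*b1 \<le> c1*d0" and h4: "a1*b0 \<le> c0*d1"
  shows "(a0+a1)*(b0+b1) \<le> (c0+c1)*(d0+d1)"
proof -
  define p where "p = a0*b0"
  define q where "q = a1*b1"
  define c where "c = c0*d0"
  define d where "d = c1*d1"
  have pq: "p*q \<le> c*d"
  proof -
    have "p*q = (a0*b1)*(a1*b0)" unfolding p_def q_def by (simp add: algebra_simps)
    also have "\<dots> \<le> (c1*d0)*(c0*d1)"
      using mult_mono[OF h3 h4] nn by simp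
    also have "\<dots> = c*d" unfolding c_def d_def by (simp add: algebra_simps)
    finally show ?thesis .
  qed
  have p0: "p \<ge> 0" "q \<ge> 0" "d \<ge> 0" "c \<ge> 0" using nn unfolding p_def q_def c_def d_def by auto
  have pc: "p \<le> c" "q \<le> c" using h1 h2 unfolding p_def q_def c_def by auto
  have "p + q \<le> c + d"
  proof (cases "c = 0")
    case True then show ?thesis using pc p0 by auto
  next
    case False
    hence cp: "c > 0" using p0 by auto
    have "(c-p)*(c-q) \<ge> 0" using pc by auto
    hence "c*(p+q) \<le> c*c + p*q" by (simp add: algebra_simps)
    also have "\<dots> \<le> c*c + c*d" using pq by simp
    finally have "c*(p+q) \<le> c*(c+d)" by (simp add: algebra_simps)
    then show ?thesis using cp by simp
  qed
  moreover have "a0*b1 + a1*b0 \<le> c1*d0 + c0*d1" using h3 h4 by simp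
  ultimately show ?thesis unfolding p_def q_def c_def d_def by (simp add: algebra_simps)
qed

lemma sum_Pow_insert:
  assumes "finite T" "x \<notin> T"
  shows "(\<Sum>A\<in>Pow (insert x T). f A) = (\<Sum>A\<in>Pow T. f A + f (insert x A))"
proof -
  have inj: "inj_on (insert x) (Pow T)"
  proof (rule inj_onI)
    fix A B assume "A \<in> Pow T" "B \<in> Pow T" "insert x A = insert x B"
    then show "A = B" using assms(2) by (metis Pow_iff insert_ident subsetD)
  qed
  have disj: "Pow T \<inter> insert x ` Pow T = {}" using assms(2) by auto
  have "(\<Sum>A\<in>Pow (insert x T). f A) = (\<Sum>A\<in>Pow T. f A) + (\<Sum>A\<in>insert x ` Pow T. f A)"
    unfolding Pow_insert using assms(1) disj by (intro sum.union_disjoint) auto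
  also have "(\<Sum>A\<in>insert x ` Pow T. f A) = (\<Sum>A\<in>Pow T. f (insert x A))"
    using sum.reindex[OF inj] by simp
  finally show ?thesis by (simp add: sum.distrib)
qed

lemma general:
  fixes S :: "'a set"
  assumes "finite S"
  shows "\<And>\<alpha> \<beta> \<gamma> \<delta> :: 'a set \<Rightarrow> real.
    (\<And>A. A \<in> Pow S \<Longrightarrow> \<alpha> A \<ge> 0) \<Longrightarrow>
    (\<And>A. A \<in> Pow S \<Longrightarrow> \<beta> A \<ge> 0) \<Longrightarrow>
    (\<And>A. A \<in> Pow S \<Longrightarrow> \<gamma> A \<ge> 0) \<Longrightarrow>
    (\<And>A. A \<in> Pow S \<Longrightarrow> \<delta> A \<ge> 0) \<Longrightarrow>
    (\<And>A B. A \<in> Pow S \<Longrightarrow> B \<in> Pow S \<Longrightarrow> \<alpha> A * \<beta> B \<le> \<gamma> (B - A) * \<delta> (A - B)) \<Longrightarrow>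
    (\<Sum>A\<in>Pow S. \<alpha> A) * (\<Sum>B\<in>Pow S. \<beta> B) \<le> (\<Sum>C\<in>Pow S. \<gamma> C) * (\<Sum>D\<in>Pow S. \<delta> D)"
  using assms
proof (induction S rule: finite_induct)
  case empty
  then show ?case by auto
next
  case (insert x T \<alpha> \<beta> \<gamma> \<delta>)
  let ?a = "\<lambda>A. \<alpha> A + \<alpha> (insert x A)"
  let ?b = "\<lambda>A. \<beta> A + \<beta> (insert x A)"
  let ?c = "\<lambda>A. \<gamma> A + \<gamma> (insert x A)"
  let ?d = "\<lambda>A. \<delta> A + \<delta> (insert x A)"
  have PI: "\<And>A. A \<in> Pow T \<Longrightarrow> A \<in> Pow (insert x T) \<and> insert x A \<in> Pow (insert x T)" by auto
  have "(\<Sum>A\<in>Pow T. ?a A) * (\<Sum>B\<in>Pow T. ?b B) \<le> (\<Sum>C\<in>Pow T. ?c C) * (\<Sum>D\<in>Pow T. ?d D)"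
  proof (rule insert.IH)
    fix A assume "A \<in> Pow T"
    from PI[OF this] show "?a A \<ge> 0" "?b A \<ge> 0" "?c A \<ge> 0" "?d A \<ge> 0"
      using insert.prems by (auto intro: add_nonneg_nonneg)
  next
    fix A B assume A: "A \<in> Pow T" and B: "B \<in> Pow T"
    have xA: "x \<notin> A" and xB: "x \<notin> B" using A B insert.hyps(2) by auto
    have BA: "B - A \<in> Pow T" and AB: "A - B \<in> Pow T" using A B by auto
    have e1: "insert x B - insert x A = B - A" using xB by auto
    have e2: "insert x A - insert x B = A - B" using xA by auto
    have e3: "insert x B - A = insert x (B - A)" using xA by auto
    have e4: "A - insert x B = A - B" using xA by auto
    have e5: "insert x A - B = insert x (A - B)" using xB by auto
    have e6: "B - insert x A = B - A" using xB by auto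
    show "?a A * ?b B \<le> ?c (B - A) * ?d (A - B)"
    proof (rule two_point)
      show "\<alpha> A * \<beta> B \<le> \<gamma> (B - A) * \<delta> (A - B)" using insert.prems(5) PI[OF A] PI[OF B] by blast
      show "\<alpha> (insert x A) * \<beta> (insert x B) \<le> \<gamma> (B - A) * \<delta> (A - B)"
        using insert.prems(5)[of "insert x A" "insert x B"] PI[OF A] PI[OF B] e1 e2 by simp
      show "\<alpha> A * \<beta> (insert x B) \<le> \<gamma> (insert x (B - A)) * \<delta> (A - B)"
        using insert.prems(5)[of "A" "insert x B"] PI[OF A] PI[OF B] e3 e4 by simp
      show "\<alpha> (insert x A) * \<beta> B \<le> \<gamma> (B - A) * \<delta> (insert x (A - B))"
        using insert.prems(5)[of "insert x A" "B"] PI[OF A] PI[OF B] e5 e6 by simp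
    qed (use insert.prems PI[OF A] PI[OF B] PI[OF BA] PI[OF AB] in auto)
  qed
  then show ?case using sum_Pow_insert[OF insert.hyps, of \<alpha>] sum_Pow_insert[OF insert.hyps, of \<beta>] sum_Pow_insert[OF insert.hyps, of \<gamma>] sum_Pow_insert[OF insert.hyps, of \<delta>] by simp
qed

theorem lemma2p3:
  fixes n :: nat and \<alpha> \<beta> \<gamma> \<delta> :: "nat set \<Rightarrow> real"
  assumes "n \<ge> 1"
    and "\<And>A. A \<in> Pow {1..n} \<Longrightarrow> \<alpha> A \<ge> 0"
    and "\<And>A. A \<in> Pow {1..n} \<Longrightarrow> \<beta> A \<ge> 0"
    and "\<And>A. A \<in> Pow {1..n} \<Longrightarrow> \<gamma> A \<ge> 0"
    and "\<And>A. A \<in> Pow {1..n} \<Longrightarrow> \<delta> A \<ge> 0"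
    and "\<And>A B. A \<in> Pow {1..n} \<Longrightarrow> B \<in> Pow {1..n} \<Longrightarrow>
           \<alpha> A * \<beta> B \<le> \<gamma> (B - A) * \<delta> (A - B)"
  shows "(\<Sum>A\<in>Pow {1..n}. \<alpha> A) * (\<Sum>B\<in>Pow {1..n}. \<beta> B)
           \<le> (\<Sum>C\<in>Pow {1..n}. \<gamma> C) * (\<Sum>D\<in>Pow {1..n}. \<delta> D)"
  using general[of "{1..n}" \<alpha> \<beta> \<gamma> \<delta>] assms(2-6) by simp

end
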